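(* Let $\lambda=(\lambda_1,\ldots,\lambda_\ell)$ be a partition with $\ell$ positive parts, and let $n\geq\ell$. If there exists $p\in\{1,\ldots,\ell-2\}$ such that $\lambda_p-2\geq\lambda_{p+1}\geq\lambda_{p+2}$, then the poset $\mathcal B_\lambda^n$ is not a lattice.
   Context: For $N\geq 1$ and a partition $\nu$ with at most $N$ positive parts, $\mathcal B_\nu^N$ is the set of semistandard Young tableaux of shape $\nu$ (rows weakly increasing, columns strictly increasing) with entries in $\{1,\ldots,N+1\}$, partially ordered by the reflexive transitive closure of $T<F_i(T)$ for $i\in\{1,\ldots,N\}$ with $F_i(T)\neq 0$. Here $F_i$ is the type A crystal lowering operator: in the reading word of $T$ (rows read from bottom to top, each row left to right) keep only letters $i$ and $i+1$, replace each $i$ by ")" and each $i+1$ by "(", and match parentheses in the usual way; if there is no unmatched ")", $F_i(T)=0$; otherwise $F_i(T)$ is obtained by changing the entry $i$ corresponding to the rightmost unmatched ")" into $i+1$. *)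

theory Defs
  imports Main
begin

text \<open>Partitions: lists of positive parts, weakly decreasing.  Part lambda_k is lam ! (k-1).\<close>
definition is_partition :: "nat list \<Rightarrow> bool" where
  "is_partition lam \<longleftrightarrow> sorted_wrt (\<ge>) lam \<and> (\<forall>x\<in>set lam. 0 < x)"

text \<open>A tableau is a list of rows (top row first); row k has length nu ! k.
  Semistandard with entries in {1..N+1}.\<close>
definition ssyt :: "nat \<Rightarrow> nat list \<Rightarrow> nat list list \<Rightarrow> bool" where
  "ssyt N nu T \<longleftrightarrow>
     map length T = nu \<and>
     (\<forall>r\<in>set T. sorted r \<and> (\<forall>x\<in>set r. 1 \<le> x \<and> x \<le> N + 1)) \<and>
     (\<forall>k j. Suc k < length T \<longrightarrow> j < length (T ! Suc k) \<longrightarrow> T ! k ! j < T ! Suc k ! j)"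

definition tableaux :: "nat \<Rightarrow> nat list \<Rightarrow> nat list list set" where
  "tableaux N nu = {T. ssyt N nu T}"

definition reading_word :: "nat list list \<Rightarrow> nat list" where
  "reading_word T = concat (rev T)"

text \<open>Positions (in increasing order) of unmatched letters i (= ")") in a word, where
  letters i+1 are "(" and each ")" is matched with the nearest preceding unmatched "(".
  c counts currently unmatched "(", k is the current position.\<close>
fun unmatched :: "nat \<Rightarrow> nat \<Rightarrow> nat list \<Rightarrow> nat \<Rightarrow> nat list" where
  "unmatched i c [] k = []"
| "unmatched i c (x # xs) k =
     (if x = Suc i then unmatched i (Suc c) xs (Suc k)
      else if x = i then (if 0 < c then unmatched i (c - 1) xs (Suc k)
                          else k # unmatched i c xs (Suc k))
      else unmatched i c xs (Suc k))"

definition F_word :: "nat \<Rightarrow> nat list \<Rightarrow> nat list option" where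
  "F_word i w = (let u = unmatched i 0 w 0 in
     if u = [] then None else Some (w[last u := Suc i]))"

fun split_by :: "nat list \<Rightarrow> 'a list \<Rightarrow> 'a list list" where
  "split_by [] w = []"
| "split_by (l # ls) w = take l w # split_by ls (drop l w)"

text \<open>Crystal lowering operator F_i on tableaux; None represents 0.\<close>
definition F_tab :: "nat \<Rightarrow> nat list list \<Rightarrow> nat list list option" where
  "F_tab i T = map_option (\<lambda>w. rev (split_by (map length (rev T)) w)) (F_word i (reading_word T))"

definition crystal_step :: "nat \<Rightarrow> nat list \<Rightarrow> (nat list list \<times> nat list list) set" where
  "crystal_step N nu = {(T, T'). T \<in> tableaux N nu \<and> (\<exists>i\<in>{1..N}. F_tab i T = Some T')}"

definition crystal_le :: "nat \<Rightarrow> nat list \<Rightarrow> nat list list \<Rightarrow> nat list list \<Rightarrow> bool" where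
  "crystal_le N nu S T \<longleftrightarrow> (S, T) \<in> (crystal_step N nu)\<^sup>*"

definition is_lub :: "'a set \<Rightarrow> ('a \<Rightarrow> 'a \<Rightarrow> bool) \<Rightarrow> 'a \<Rightarrow> 'a \<Rightarrow> 'a \<Rightarrow> bool" where
  "is_lub A le x y z \<longleftrightarrow> z \<in> A \<and> le x z \<and> le y z \<and> (\<forall>w\<in>A. le x w \<and> le y w \<longrightarrow> le z w)"

definition is_glb :: "'a set \<Rightarrow> ('a \<Rightarrow> 'a \<Rightarrow> bool) \<Rightarrow> 'a \<Rightarrow> 'a \<Rightarrow> 'a \<Rightarrow> bool" where
  "is_glb A le x y z \<longleftrightarrow> z \<in> A \<and> le z x \<and> le z y \<and> (\<forall>w\<in>A. le w x \<and> le w y \<longrightarrow> le w z)"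

definition is_lattice :: "'a set \<Rightarrow> ('a \<Rightarrow> 'a \<Rightarrow> bool) \<Rightarrow> bool" where
  "is_lattice A le \<longleftrightarrow> (\<forall>x\<in>A. \<forall>y\<in>A. (\<exists>z. is_lub A le x y z) \<and> (\<exists>z. is_glb A le x y z))"

end

theory Submission
  imports Defs
begin

lemma unm_rep:
  "unmatched i c (replicate m x @ ys) k =
    (if x = Suc i then unmatched i (c+m) ys (k+m)
     else if x = i then [k+c..<k+m] @ unmatched i (c-m) ys (k+m)
     else unmatched i c ys (k+m))"
proof (induction m arbitrary: c k)
  case 0 then show ?case by simp
next
  case (Suc m)
  show ?case
  proof (cases "x = Suc i")
    case True then show ?thesis using Suc by simp
  next
    case F1: False
    show ?thesis
    proof (cases "x = i")
      case True
      show ?thesis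
      proof (cases "0 < c")
        case True
        then show ?thesis using Suc.IH[of "c - 1" "Suc k"] \<open>x = i\<close> by simp
      next
        case False
        then have "c = 0" by simp
        then show ?thesis using Suc \<open>x = i\<close> by (simp add: upt_rec)
      qed
    next
      case False then show ?thesis using Suc F1 by simp
    qed
  qed
qed

lemma unm_shift: "unmatched i c w (k + d) = map ((+) d) (unmatched i c w k)"
  by (induction i c w k rule: unmatched.induct) auto

lemma unm_skip:
  assumes "\<forall>v\<in>set X. v \<noteq> i \<and> v \<noteq> Suc i"
  shows "unmatched i c (X @ w) k = unmatched i c w (k + length X)"
  using assms by (induction X arbitrary: k) auto

lemma unm_skip2:
  assumes "\<forall>v\<in>set Y. v \<noteq> i \<and> v \<noteq> Suc i"
  shows "unmatched i c (w @ Y) k = unmatched i c w k"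
proof -
  have "unmatched i c Y k = []" for c k using assms by (induction Y arbitrary: c k) auto
  then show ?thesis by (induction i c w k rule: unmatched.induct) auto
qed

lemma unm_set: "j \<in> set (unmatched i c w k) \<Longrightarrow> k \<le> j \<and> j < k + length w \<and> w ! (j - k) = i"
proof (induction i c w k rule: unmatched.induct)
  case (1 i c k) then show ?case by simp
next
  case (2 i c x xs k)
  then show ?case by (auto split: if_splits simp: nth_Cons')
qed

lemma F_word_mid:
  assumes "\<forall>v\<in>set X. v \<noteq> i \<and> v \<noteq> Suc i" "\<forall>v\<in>set Y. v \<noteq> i \<and> v \<noteq> Suc i"
  shows "F_word i (X @ m @ Y) = map_option (\<lambda>m'. X @ m' @ Y) (F_word i m)"
proof -
  have u: "unmatched i 0 (X @ m @ Y) 0 = map ((+) (length X)) (unmatched i 0 m 0)"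
    using assms unm_skip[of X i 0 "m @ Y" 0] unm_skip2[of Y i 0 m "length X"]
      unm_shift[of i 0 m 0 "length X"] by simp
  show ?thesis
  proof (cases "unmatched i 0 m 0 = []")
    case True then show ?thesis using u by (simp add: F_word_def Let_def)
  next
    case False
    then have "last (unmatched i 0 m 0) \<in> set (unmatched i 0 m 0)" by simp
    then have lt: "last (unmatched i 0 m 0) < length m" using unm_set by fastforce
    have "(X @ m @ Y)[length X + last (unmatched i 0 m 0) := Suc i] = X @ m[last (unmatched i 0 m 0) := Suc i] @ Y"
      using lt by (simp add: list_update_append)
    then show ?thesis using u False by (simp add: F_word_def Let_def last_map)
  qed
qed

lemma concat_split_by: "length w = sum_list ls \<Longrightarrow> concat (split_by ls w) = w"
  by (induction ls arbitrary: w) (auto simp: min_def)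

lemma split_by_concat: "split_by (map length Ts) (concat Ts) = Ts"
  by (induction Ts) auto

lemma F_word_length: "F_word i w = Some w' \<Longrightarrow> length w' = length w"
  by (auto simp: F_word_def Let_def split: if_splits)

lemma length_rw: "length (reading_word T) = sum_list (map length (rev T))"
  by (simp add: reading_word_def length_concat)

lemma F_tab_rw:
  assumes "F_tab i T = Some T'"
  shows "\<exists>k. unmatched i 0 (reading_word T) 0 \<noteq> [] \<and> k = last (unmatched i 0 (reading_word T) 0)
     \<and> k < length (reading_word T) \<and> reading_word T ! k = i
     \<and> reading_word T' = (reading_word T)[k := Suc i]"
proof -
  obtain w' where w': "F_word i (reading_word T) = Some w'" and T': "T' = rev (split_by (map length (rev T)) w')"
    using assms by (auto simp: F_tab_def)
  let ?u = "unmatched i 0 (reading_word T) 0"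
  have ne: "?u \<noteq> []" and w'e: "w' = (reading_word T)[last ?u := Suc i]"
    using w' by (auto simp: F_word_def Let_def split: if_splits)
  have "last ?u \<in> set ?u" using ne by simp
  then have k: "last ?u < length (reading_word T) \<and> reading_word T ! last ?u = i"
    using unm_set by fastforce
  have "reading_word T' = concat (split_by (map length (rev T)) w')"
    by (simp add: T' reading_word_def)
  also have "\<dots> = w'" using F_word_length[OF w'] length_rw[of T] by (intro concat_split_by) simp
  finally show ?thesis using ne k w'e by blast
qed

definition rk :: "nat list list \<Rightarrow> nat" where "rk T = sum_list (reading_word T)"

lemma F_tab_rk: "F_tab i T = Some T' \<Longrightarrow> rk T' = Suc (rk T)"
proof -
  assume "F_tab i T = Some T'"
  from F_tab_rw[OF this] obtain k where k: "k < length (reading_word T)" "reading_word T ! k = i"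
    "reading_word T' = (reading_word T)[k := Suc i]" by blast
  have "sum_list (reading_word T) \<ge> i" using k elem_le_sum_list by metis
  then show ?thesis using k sum_list_update[OF k(1), of "Suc i"] by (simp add: rk_def)
qed

lemma step_rk: "(S, T) \<in> crystal_step N nu \<Longrightarrow> rk T = Suc (rk S)"
  by (auto simp: crystal_step_def F_tab_rk)

lemma pow_rk: "(S, T) \<in> (crystal_step N nu) ^^ m \<Longrightarrow> rk T = rk S + m"
proof (induction m arbitrary: T)
  case 0 then show ?case by simp
next
  case (Suc m)
  then obtain y where "(S, y) \<in> (crystal_step N nu) ^^ m" "(y, T) \<in> crystal_step N nu"
    by (meson relpow_Suc_E)
  then show ?case using Suc step_rk by fastforce
qed

lemma le_rk: "crystal_le N nu S T \<Longrightarrow> \<exists>m. (S, T) \<in> (crystal_step N nu) ^^ m \<and> rk T = rk S + m"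
  unfolding crystal_le_def rtrancl_power using pow_rk by blast

definition tabl :: "nat list \<Rightarrow> nat \<Rightarrow> nat list \<Rightarrow> nat list \<Rightarrow> nat list \<Rightarrow> nat list list" where
  "tabl lam P r0 r1 r2 = map (\<lambda>k. if k = P then r0 else if k = Suc P then r1 else if k = Suc (Suc P) then r2
     else replicate (lam!k) (if k < P then Suc k else Suc (Suc k))) [0..<length lam]"

definition Xw :: "nat list \<Rightarrow> nat \<Rightarrow> nat list" where
  "Xw lam P = concat (rev (map (\<lambda>k. replicate (lam!k) (Suc (Suc k))) [Suc (Suc (Suc P))..<length lam]))"

definition Yw :: "nat list \<Rightarrow> nat \<Rightarrow> nat list" where
  "Yw lam P = concat (rev (map (\<lambda>k. replicate (lam!k) (Suc k)) [0..<P]))"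

lemma Xw_set: "v \<in> set (Xw lam P) \<Longrightarrow> P + 5 \<le> v"
  by (auto simp: Xw_def)

lemma Yw_set: "v \<in> set (Yw lam P) \<Longrightarrow> v \<le> P"
  by (auto simp: Yw_def)

lemma rw_tabl:
  assumes "Suc (Suc P) < length lam"
  shows "reading_word (tabl lam P r0 r1 r2) = Xw lam P @ (r2 @ r1 @ r0) @ Yw lam P"
proof -
  have split: "[0..<length lam] = [0..<P] @ [P, Suc P, Suc (Suc P)] @ [Suc (Suc (Suc P))..<length lam]"
  proof -
    have e1: "[P..<length lam] = P # Suc P # Suc (Suc P) # [Suc(Suc(Suc P))..<length lam]"
      using assms by (simp add: upt_conv_Cons)
    have "[0..<length lam] = [0..<P] @ [P..<length lam]"
      using assms upt_add_eq_append[of 0 P "length lam - P"] by simp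
    then show ?thesis using e1 by simp
  qed
  let ?f = "(\<lambda>k. if k = P then r0 else if k = Suc P then r1 else if k = Suc (Suc P) then r2
     else replicate (lam!k) (if k < P then Suc k else Suc (Suc k)))"
  have a: "map ?f [0..<P] = map (\<lambda>k. replicate (lam!k) (Suc k)) [0..<P]" by simp
  have b: "map ?f [Suc (Suc (Suc P))..<length lam] = map (\<lambda>k. replicate (lam!k) (Suc (Suc k))) [Suc (Suc (Suc P))..<length lam]"
    by simp
  show ?thesis unfolding reading_word_def tabl_def split map_append a b
    by (simp add: Xw_def Yw_def)
qed

lemma len_tabl: "length (tabl lam P r0 r1 r2) = length lam"
  by (simp add: tabl_def)

lemma nth_tabl: "k < length lam \<Longrightarrow> tabl lam P r0 r1 r2 ! k = (if k = P then r0 else if k = Suc P then r1 else if k = Suc (Suc P) then r2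
     else replicate (lam!k) (if k < P then Suc k else Suc (Suc k)))"
  by (simp add: tabl_def)

lemma F_tab_tabl:
  assumes "Suc (Suc P) < length lam" "Suc P \<le> i" "i \<le> P + 3"
    and "F_word i (r2 @ r1 @ r0) = Some (s2 @ s1 @ s0)"
    and "length s0 = length r0" "length s1 = length r1" "length s2 = length r2"
  shows "F_tab i (tabl lam P r0 r1 r2) = Some (tabl lam P s0 s1 s2)"
proof -
  have X: "\<forall>v\<in>set (Xw lam P). v \<noteq> i \<and> v \<noteq> Suc i" using Xw_set assms(3) by fastforce
  have Y: "\<forall>v\<in>set (Yw lam P). v \<noteq> i \<and> v \<noteq> Suc i" using Yw_set assms(2) by fastforce
  have "F_word i (reading_word (tabl lam P r0 r1 r2)) = Some (reading_word (tabl lam P s0 s1 s2))"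
  proof -
    have "F_word i (Xw lam P @ (r2 @ r1 @ r0) @ Yw lam P) = Some (Xw lam P @ (s2 @ s1 @ s0) @ Yw lam P)"
      using F_word_mid[OF X Y, of "r2 @ r1 @ r0"] assms(4) by simp
    then show ?thesis by (simp only: rw_tabl[OF assms(1)])
  qed
  moreover have "map length (tabl lam P r0 r1 r2) = map length (tabl lam P s0 s1 s2)"
    using assms by (simp add: tabl_def)
  ultimately show ?thesis
    by (simp add: F_tab_def reading_word_def rev_map[symmetric] split_by_concat[of "rev (tabl lam P s0 s1 s2)", simplified rev_map[symmetric]])
qed

lemma part_mono:
  assumes "is_partition lam" "i \<le> j" "j < length lam"
  shows "lam ! j \<le> lam ! i"
  using assms by (cases "i = j") (auto simp: is_partition_def sorted_wrt_iff_nth_less)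

lemma part_pos:
  assumes "is_partition lam" "j < length lam"
  shows "0 < lam ! j"
  using assms by (auto simp: is_partition_def)

lemma ssyt_tabl:
  assumes part: "is_partition lam" and len: "Suc (Suc P) < length lam" "length lam \<le> n"
    and l0: "length r0 = lam ! P" and l1: "length r1 = lam ! Suc P" and l2: "length r2 = lam ! Suc (Suc P)"
    and s: "sorted r0" "sorted r1" "sorted r2"
    and e: "\<forall>v\<in>set (r0 @ r1 @ r2). Suc P \<le> v \<and> v \<le> P + 4"
    and c1: "\<forall>j<length r1. r0 ! j < r1 ! j" and c2: "\<forall>j<length r2. r1 ! j < r2 ! j"
  shows "tabl lam P r0 r1 r2 \<in> tableaux n lam"
  unfolding tableaux_def ssyt_def mem_Collect_eq
proof (intro conjI)
  show "map length (tabl lam P r0 r1 r2) = lam"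
    by (rule nth_equalityI) (auto simp: len_tabl nth_tabl l0 l1 l2)
next
  show "\<forall>r\<in>set (tabl lam P r0 r1 r2). sorted r \<and> (\<forall>x\<in>set r. 1 \<le> x \<and> x \<le> n + 1)"
  proof
  fix r assume "r \<in> set (tabl lam P r0 r1 r2)"
  then obtain k where k: "k < length lam" "r = tabl lam P r0 r1 r2 ! k"
    by (auto simp: in_set_conv_nth len_tabl)
  have ee: "\<forall>v\<in>set (r0 @ r1 @ r2). 1 \<le> v \<and> v \<le> n + 1" using e len by fastforce
  show "sorted r \<and> (\<forall>x\<in>set r. 1 \<le> x \<and> x \<le> n + 1)"
    using k s ee len by (auto simp: nth_tabl)
  qed
next
  show "\<forall>k j. Suc k < length (tabl lam P r0 r1 r2) \<longrightarrow> j < length (tabl lam P r0 r1 r2 ! Suc k) \<longrightarrow>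
     tabl lam P r0 r1 r2 ! k ! j < tabl lam P r0 r1 r2 ! Suc k ! j"
  proof (intro allI impI)
  fix k j assume k: "Suc k < length (tabl lam P r0 r1 r2)" and j: "j < length (tabl lam P r0 r1 r2 ! Suc k)"
  have kl: "Suc k < length lam" using k by (simp add: len_tabl)
  have jl: "j < lam ! Suc k" using j kl by (simp add: nth_tabl l0 l1 l2 split: if_splits)
  have jk: "j < lam ! k" using jl part_mono[OF part, of k "Suc k"] kl by simp
  have jP: "j < lam ! P" if "P \<le> k" using part_mono[OF part, of P k] that kl jk by simp
  have r0j: "r0 ! j \<in> set r0" if "j < lam ! P" using that l0 by simp
  have r1j: "r1 ! j \<in> set r1" if "j < lam ! Suc P" using that l1 by simp
  have r2j: "r2 ! j \<in> set r2" if "j < lam ! Suc (Suc P)" using that l2 by simp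
  show "tabl lam P r0 r1 r2 ! k ! j < tabl lam P r0 r1 r2 ! Suc k ! j"
  proof -
    consider "Suc k < P" | "Suc k = P" | "k = P" | "k = Suc P" | "k = Suc (Suc P)" | "Suc (Suc P) < k" by linarith
    then show ?thesis
    proof cases
      case 1 then show ?thesis using kl jl jk by (simp add: nth_tabl)
    next
      case 2
      then have "r0 ! j \<in> set r0" using r0j jl by simp
      then have "Suc P \<le> r0 ! j" using e by auto
      then show ?thesis using 2 kl jl jk by (simp add: nth_tabl)
    next
      case 3 then show ?thesis using kl jl c1 l1 by (auto simp: nth_tabl)
    next
      case 4 then show ?thesis using kl jl c2 l2 by (auto simp: nth_tabl)
    next
      case 5
      then have "r2 ! j \<in> set r2" using r2j jk by simp
      then have "r2 ! j \<le> P + 4" using e by auto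
      then show ?thesis using 5 kl jl jk by (simp add: nth_tabl)
    next
      case 6 then show ?thesis using kl jl jk by (simp add: nth_tabl)
    qed
  qed
qed
  qed

lemma rep_upd: "n < m \<Longrightarrow> (replicate m v)[n := w] = replicate n v @ w # replicate (m - n - 1) v"
proof (induction m arbitrary: n)
  case 0 then show ?case by simp
next
  case (Suc m) then show ?case by (cases n) auto
qed

lemmas Fsimps = F_word_def Let_def unm_rep list_update_append rep_upd

lemma st_a_a1:
  assumes "y0 + 1 \<le> x0"
  shows "F_word (Suc P) ((replicate z0 (P+3) @ [P+4]) @ replicate (Suc y0) (P+2) @ (replicate (Suc x0) (Suc P) @ [P+3]))
   = Some ((replicate z0 (P+3) @ [P+4]) @ replicate (Suc y0) (P+2) @ (replicate x0 (Suc P) @ [P+2, P+3]))"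
  using assms by (simp add: Fsimps del: replicate.simps)

lemma st_a1_a2:
  assumes "y0 + 1 \<le> x0 \<and> z0 \<le> y0"
  shows "F_word (P+2) ((replicate z0 (P+3) @ [P+4]) @ replicate (Suc y0) (P+2) @ (replicate x0 (Suc P) @ [P+2, P+3]))
   = Some ((replicate z0 (P+3) @ [P+4]) @ replicate (Suc y0) (P+2) @ (replicate x0 (Suc P) @ [P+3, P+3]))"
  using assms by (simp add: Fsimps del: replicate.simps)

lemma st_a2_c:
  assumes "y0 + 1 \<le> x0 \<and> z0 \<le> y0"
  shows "F_word (P+3) ((replicate z0 (P+3) @ [P+4]) @ replicate (Suc y0) (P+2) @ (replicate x0 (Suc P) @ [P+3, P+3]))
   = Some ((replicate z0 (P+3) @ [P+4]) @ replicate (Suc y0) (P+2) @ (replicate x0 (Suc P) @ [P+3, P+4]))"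
  using assms by (simp add: Fsimps del: replicate.simps)

lemma st_a_a':
  assumes "y0 + 1 \<le> x0 \<and> z0 \<le> y0"
  shows "F_word (P+2) ((replicate z0 (P+3) @ [P+4]) @ replicate (Suc y0) (P+2) @ (replicate (Suc x0) (Suc P) @ [P+3]))
   = Some ((replicate z0 (P+3) @ [P+4]) @ (replicate y0 (P+2) @ [P+3]) @ (replicate (Suc x0) (Suc P) @ [P+3]))"
  using assms by (simp add: Fsimps del: replicate.simps)

lemma st_a'_d:
  assumes "y0 + 1 \<le> x0 \<and> z0 \<le> y0"
  shows "F_word (P+3) ((replicate z0 (P+3) @ [P+4]) @ (replicate y0 (P+2) @ [P+3]) @ (replicate (Suc x0) (Suc P) @ [P+3]))
   = Some ((replicate z0 (P+3) @ [P+4]) @ (replicate y0 (P+2) @ [P+3]) @ (replicate (Suc x0) (Suc P) @ [P+4]))"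
  using assms by (simp add: Fsimps del: replicate.simps)

lemma st_b_b1:
  assumes "y0 + 1 \<le> x0 \<and> z0 \<le> y0"
  shows "F_word (P+3) (replicate (Suc z0) (P+3) @ replicate (Suc y0) (P+2) @ (replicate (Suc x0) (Suc P) @ [P+4]))
   = Some ((replicate z0 (P+3) @ [P+4]) @ replicate (Suc y0) (P+2) @ (replicate (Suc x0) (Suc P) @ [P+4]))"
  using assms by (simp add: Fsimps del: replicate.simps)

lemma st_b1_d:
  assumes "y0 + 1 \<le> x0 \<and> z0 \<le> y0"
  shows "F_word (P+2) ((replicate z0 (P+3) @ [P+4]) @ replicate (Suc y0) (P+2) @ (replicate (Suc x0) (Suc P) @ [P+4]))
   = Some ((replicate z0 (P+3) @ [P+4]) @ (replicate y0 (P+2) @ [P+3]) @ (replicate (Suc x0) (Suc P) @ [P+4]))"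
  using assms by (simp add: Fsimps del: replicate.simps)

lemma st_b1_b2:
  assumes "y0 + 1 \<le> x0 \<and> z0 \<le> y0"
  shows "F_word (Suc P) ((replicate z0 (P+3) @ [P+4]) @ replicate (Suc y0) (P+2) @ (replicate (Suc x0) (Suc P) @ [P+4]))
   = Some ((replicate z0 (P+3) @ [P+4]) @ replicate (Suc y0) (P+2) @ (replicate x0 (Suc P) @ [P+2, P+4]))"
  using assms by (simp add: Fsimps del: replicate.simps)

lemma st_b2_c:
  assumes "y0 + 1 \<le> x0 \<and> z0 \<le> y0"
  shows "F_word (P+2) ((replicate z0 (P+3) @ [P+4]) @ replicate (Suc y0) (P+2) @ (replicate x0 (Suc P) @ [P+2, P+4]))
   = Some ((replicate z0 (P+3) @ [P+4]) @ replicate (Suc y0) (P+2) @ (replicate x0 (Suc P) @ [P+3, P+4]))"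
  using assms by (simp add: Fsimps del: replicate.simps)

lemma unm_a: "unmatched (P+3) 0 ((replicate z0 (P+3) @ [P+4]) @ replicate (Suc y0) (P+2) @ (replicate (Suc x0) (Suc P) @ [P+3])) 0 = [0..<z0]"
  by (simp add: unm_rep del: replicate.simps)

lemma XY_ok:
  assumes "Suc P \<le> i" "i \<le> P + 3"
  shows "\<forall>v\<in>set (Xw lam P). v \<noteq> i \<and> v \<noteq> Suc i" "\<forall>v\<in>set (Yw lam P). v \<noteq> i \<and> v \<noteq> Suc i"
  using Xw_set[of _ lam P] Yw_set[of _ lam P] assms by fastforce+

lemma unm_mid:
  assumes "Suc P \<le> i" "i \<le> P + 3"
  shows "unmatched i 0 (Xw lam P @ m @ Yw lam P) 0 = map ((+) (length (Xw lam P))) (unmatched i 0 m 0)"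
  using XY_ok[OF assms, of lam] unm_skip[of "Xw lam P" i 0 "m @ Yw lam P" 0]
    unm_skip2[of "Yw lam P" i 0 m "length (Xw lam P)"] unm_shift[of i 0 m 0 "length (Xw lam P)"] by simp

lemma step_intro:
  assumes "T \<in> tableaux n lam" "1 \<le> i" "i \<le> n" "F_tab i T = Some T'"
  shows "(T, T') \<in> crystal_step n lam"
  using assms by (auto simp: crystal_step_def)

lemma upd_nth_other: "k' \<noteq> k \<Longrightarrow> w' = w[k := v] \<Longrightarrow> w' ! k' = w ! k'"
  by simp

lemma upd_nth_same: "k < length w \<Longrightarrow> w' = w[k := v] \<Longrightarrow> w' ! k = v"
  by simp

lemma main:
  assumes part: "is_partition lam" and ln: "length lam \<le> n" and lP: "Suc (Suc P) < length lam"
    and x: "lam ! P = x0 + 2" and y: "lam ! Suc P = Suc y0" and z: "lam ! Suc (Suc P) = Suc z0"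
    and xy: "y0 + 1 \<le> x0" and yz: "z0 \<le> y0"
  shows "\<not> is_lattice (tableaux n lam) (crystal_le n lam)"
proof
  assume lat: "is_lattice (tableaux n lam) (crystal_le n lam)"
  let ?A = "tableaux n lam"
  let ?le = "crystal_le n lam"
  let ?st = "crystal_step n lam"
  define R2a where "R2a = replicate z0 (P+3) @ [P+4]"
  define R2b where "R2b = replicate (Suc z0) (P+3)"
  define R1a where "R1a = replicate (Suc y0) (P+2)"
  define R1d where "R1d = replicate y0 (P+2) @ [P+3]"
  define ta where "ta = tabl lam P (replicate (Suc x0) (Suc P) @ [P+3]) R1a R2a"
  define ta1 where "ta1 = tabl lam P (replicate x0 (Suc P) @ [P+2, P+3]) R1a R2a"
  define ta2 where "ta2 = tabl lam P (replicate x0 (Suc P) @ [P+3, P+3]) R1a R2a"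
  define tc where "tc = tabl lam P (replicate x0 (Suc P) @ [P+3, P+4]) R1a R2a"
  define ta' where "ta' = tabl lam P (replicate (Suc x0) (Suc P) @ [P+3]) R1d R2a"
  define td where "td = tabl lam P (replicate (Suc x0) (Suc P) @ [P+4]) R1d R2a"
  define tb where "tb = tabl lam P (replicate (Suc x0) (Suc P) @ [P+4]) R1a R2b"
  define tb1 where "tb1 = tabl lam P (replicate (Suc x0) (Suc P) @ [P+4]) R1a R2a"
  define tb2 where "tb2 = tabl lam P (replicate x0 (Suc P) @ [P+2, P+4]) R1a R2a"
  note defs = R2a_def R2b_def R1a_def R1d_def
  have P3: "P + 3 \<le> n" using lP ln by simp
  have mem: "tabl lam P r0 r1 r2 \<in> ?A"
    if "length r0 = x0 + 2" "length r1 = Suc y0" "length r2 = Suc z0"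
       "sorted r0" "sorted r1" "sorted r2" "\<forall>v\<in>set (r0 @ r1 @ r2). Suc P \<le> v \<and> v \<le> P + 4"
       "\<forall>j<length r1. r0 ! j < r1 ! j" "\<forall>j<length r2. r1 ! j < r2 ! j" for r0 r1 r2
    using ssyt_tabl[OF part lP ln] that x y z by simp
  have m_ta: "ta \<in> ?A" unfolding ta_def defs using xy yz
    by (intro mem) (auto simp: nth_append sorted_append nth_replicate simp del: replicate.simps)
  have m_ta1: "ta1 \<in> ?A" unfolding ta1_def defs using xy yz
    by (intro mem) (auto simp: nth_append sorted_append nth_replicate simp del: replicate.simps)
  have m_ta2: "ta2 \<in> ?A" unfolding ta2_def defs using xy yz
    by (intro mem) (auto simp: nth_append sorted_append nth_replicate simp del: replicate.simps)
  have m_tc: "tc \<in> ?A" unfolding tc_def defs using xy yz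
    by (intro mem) (auto simp: nth_append sorted_append nth_replicate simp del: replicate.simps)
  have m_tap: "ta' \<in> ?A" unfolding ta'_def defs using xy yz
    by (intro mem) (auto simp: nth_append sorted_append nth_replicate simp del: replicate.simps)
  have m_td: "td \<in> ?A" unfolding td_def defs using xy yz
    by (intro mem) (auto simp: nth_append sorted_append nth_replicate simp del: replicate.simps)
  have m_tb: "tb \<in> ?A" unfolding tb_def defs using xy yz
    by (intro mem) (auto simp: nth_append sorted_append nth_replicate simp del: replicate.simps)
  have m_tb1: "tb1 \<in> ?A" unfolding tb1_def defs using xy yz
    by (intro mem) (auto simp: nth_append sorted_append nth_replicate simp del: replicate.simps)
  have m_tb2: "tb2 \<in> ?A" unfolding tb2_def defs using xy yz
    by (intro mem) (auto simp: nth_append sorted_append nth_replicate simp del: replicate.simps)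
  have f_ta_ta1: "F_tab (Suc P) ta = Some ta1" unfolding ta_def ta1_def defs
    by (rule F_tab_tabl[OF lP _ _ st_a_a1]) (use xy yz in simp_all)
  have s_ta_ta1: "(ta, ta1) \<in> ?st" using step_intro[OF m_ta _ _ f_ta_ta1] P3 by simp
  have f_ta1_ta2: "F_tab (P+2) ta1 = Some ta2" unfolding ta1_def ta2_def defs
    by (rule F_tab_tabl[OF lP _ _ st_a1_a2]) (use xy yz in simp_all)
  have s_ta1_ta2: "(ta1, ta2) \<in> ?st" using step_intro[OF m_ta1 _ _ f_ta1_ta2] P3 by simp
  have f_ta2_tc: "F_tab (P+3) ta2 = Some tc" unfolding ta2_def tc_def defs
    by (rule F_tab_tabl[OF lP _ _ st_a2_c]) (use xy yz in simp_all)
  have s_ta2_tc: "(ta2, tc) \<in> ?st" using step_intro[OF m_ta2 _ _ f_ta2_tc] P3 by simp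
  have f_ta_tap: "F_tab (P+2) ta = Some ta'" unfolding ta_def ta'_def defs
    by (rule F_tab_tabl[OF lP _ _ st_a_a']) (use xy yz in simp_all)
  have s_ta_tap: "(ta, ta') \<in> ?st" using step_intro[OF m_ta _ _ f_ta_tap] P3 by simp
  have f_tap_td: "F_tab (P+3) ta' = Some td" unfolding ta'_def td_def defs
    by (rule F_tab_tabl[OF lP _ _ st_a'_d]) (use xy yz in simp_all)
  have s_tap_td: "(ta', td) \<in> ?st" using step_intro[OF m_tap _ _ f_tap_td] P3 by simp
  have f_tb_tb1: "F_tab (P+3) tb = Some tb1" unfolding tb_def tb1_def defs
    by (rule F_tab_tabl[OF lP _ _ st_b_b1]) (use xy yz in simp_all)
  have s_tb_tb1: "(tb, tb1) \<in> ?st" using step_intro[OF m_tb _ _ f_tb_tb1] P3 by simp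
  have f_tb1_td: "F_tab (P+2) tb1 = Some td" unfolding tb1_def td_def defs
    by (rule F_tab_tabl[OF lP _ _ st_b1_d]) (use xy yz in simp_all)
  have s_tb1_td: "(tb1, td) \<in> ?st" using step_intro[OF m_tb1 _ _ f_tb1_td] P3 by simp
  have f_tb1_tb2: "F_tab (Suc P) tb1 = Some tb2" unfolding tb1_def tb2_def defs
    by (rule F_tab_tabl[OF lP _ _ st_b1_b2]) (use xy yz in simp_all)
  have s_tb1_tb2: "(tb1, tb2) \<in> ?st" using step_intro[OF m_tb1 _ _ f_tb1_tb2] P3 by simp
  have f_tb2_tc: "F_tab (P+2) tb2 = Some tc" unfolding tb2_def tc_def defs
    by (rule F_tab_tabl[OF lP _ _ st_b2_c]) (use xy yz in simp_all)
  have s_tb2_tc: "(tb2, tc) \<in> ?st" using step_intro[OF m_tb2 _ _ f_tb2_tc] P3 by simp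
  have rs: "rk ta1 = Suc (rk ta)" "rk ta2 = Suc (rk ta1)" "rk tc = Suc (rk ta2)" "rk ta' = Suc (rk ta)"
    "rk td = Suc (rk ta')" "rk tb1 = Suc (rk tb)" "rk td = Suc (rk tb1)"
    using step_rk s_ta_ta1 s_ta1_ta2 s_ta2_tc s_ta_tap s_tap_td s_tb_tb1 s_tb1_td by blast+
  have le_ac: "?le ta tc" unfolding crystal_le_def using s_ta_ta1 s_ta1_ta2 s_ta2_tc by simp
  have le_ad: "?le ta td" unfolding crystal_le_def using s_ta_tap s_tap_td by simp
  have le_bc: "?le tb tc" unfolding crystal_le_def using s_tb_tb1 s_tb1_tb2 s_tb2_tc by simp
  have le_bd: "?le tb td" unfolding crystal_le_def using s_tb_tb1 s_tb1_td by simp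
  obtain zz where "is_lub ?A ?le ta tb zz" using lat m_ta m_tb unfolding is_lattice_def by blast
  then have zA: "zz \<in> ?A" "?le ta zz" "?le tb zz" and zmin: "\<forall>w\<in>?A. ?le ta w \<and> ?le tb w \<longrightarrow> ?le zz w"
    by (auto simp: is_lub_def)
  have zc: "?le zz tc" and zd: "?le zz td" using zmin m_tc m_td le_ac le_ad le_bc le_bd by blast+
  obtain m1 where m1: "(ta, zz) \<in> ?st ^^ m1" "rk zz = rk ta + m1" using le_rk[OF zA(2)] by blast
  obtain m2 where m2: "(zz, td) \<in> ?st ^^ m2" "rk td = rk zz + m2" using le_rk[OF zd] by blast
  obtain m3 where m3: "(tb, zz) \<in> ?st ^^ m3" "rk zz = rk tb + m3" using le_rk[OF zA(3)] by blast
  have m13: "m3 = m1" using rs m1 m3 by simp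
  have m12: "m1 + m2 = 2" using rs m1 m2 by simp
  let ?X = "Xw lam P"
  have rwa: "reading_word ta = ?X @ ((replicate z0 (P+3) @ [P+4]) @ replicate (Suc y0) (P+2) @ (replicate (Suc x0) (Suc P) @ [P+3])) @ Yw lam P"
    unfolding ta_def defs rw_tabl[OF lP] ..
  have rwb: "reading_word tb = ?X @ (replicate (Suc z0) (P+3) @ replicate (Suc y0) (P+2) @ (replicate (Suc x0) (Suc P) @ [P+4])) @ Yw lam P"
    unfolding tb_def defs rw_tabl[OF lP] ..
  have rwc: "reading_word tc = ?X @ ((replicate z0 (P+3) @ [P+4]) @ replicate (Suc y0) (P+2) @ (replicate x0 (Suc P) @ [P+3, P+4])) @ Yw lam P"
    unfolding tc_def defs rw_tabl[OF lP] ..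
  have rwd: "reading_word td = ?X @ ((replicate z0 (P+3) @ [P+4]) @ (replicate y0 (P+2) @ [P+3]) @ (replicate (Suc x0) (Suc P) @ [P+4])) @ Yw lam P"
    unfolding td_def defs rw_tabl[OF lP] ..
  consider "m1 = 0" | "m1 = 1" | "m1 = 2" using m12 by linarith
  then show False
  proof cases
    case 1
    then have "zz = ta" "zz = tb" using m1 m3 m13 by auto
    then have "reading_word ta = reading_word tb" by simp
    then show False unfolding rwa rwb by (simp del: replicate.simps)
  next
    case 3
    then have "zz = td" using m2 m12 by auto
    then obtain m4 where m4: "(td, tc) \<in> ?st ^^ m4" "rk tc = rk td + m4" using le_rk[OF zc] by blast
    then have "m4 = 1" using rs by simp
    then have "(td, tc) \<in> ?st" using m4 by simp
    then obtain i where "F_tab i td = Some tc" by (auto simp: crystal_step_def)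
    from F_tab_rw[OF this] obtain k where k: "reading_word tc = (reading_word td)[k := Suc i]" by blast
    define r1 where "r1 = length ?X + (z0 + 1 + y0)"
    define r2 where "r2 = length ?X + (z0 + 1 + Suc y0 + x0)"
    have c1: "reading_word tc ! r1 = P + 2" "reading_word td ! r1 = P + 3"
      unfolding rwc rwd r1_def by (simp_all add: nth_append del: replicate.simps)
    have c2: "reading_word tc ! r2 = P + 3" "reading_word td ! r2 = Suc P"
      unfolding rwc rwd r2_def using xy by (simp_all add: nth_append del: replicate.simps)
    have "k = r1" using upd_nth_other[OF _ k, of r1] c1 by fastforce
    moreover have "k = r2" using upd_nth_other[OF _ k, of r2] c2 by fastforce
    moreover have "r1 \<noteq> r2" unfolding r1_def r2_def using xy by simp
    ultimately show False by simp
  next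
    case 2
    then have "(ta, zz) \<in> ?st" "(tb, zz) \<in> ?st" using m1 m3 m13 by auto
    then obtain i j where fi: "F_tab i ta = Some zz" and fj: "F_tab j tb = Some zz" by (auto simp: crystal_step_def)
    from F_tab_rw[OF fi] obtain ka where ka: "unmatched i 0 (reading_word ta) 0 \<noteq> []"
      "ka = last (unmatched i 0 (reading_word ta) 0)" "ka < length (reading_word ta)"
      "reading_word ta ! ka = i" "reading_word zz = (reading_word ta)[ka := Suc i]" by blast
    from F_tab_rw[OF fj] obtain kb where kb: "kb < length (reading_word tb)"
      "reading_word tb ! kb = j" "reading_word zz = (reading_word tb)[kb := Suc j]" by blast
    define pp where "pp = length ?X + z0"
    define qq where "qq = length ?X + (z0 + 1 + Suc y0 + Suc x0)"
    have c1: "reading_word ta ! pp = P + 4" "reading_word tb ! pp = P + 3"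
      unfolding rwa rwb pp_def by (simp_all add: nth_append del: replicate.simps)
    have c2: "reading_word ta ! qq = P + 3" "reading_word tb ! qq = P + 4"
      unfolding rwa rwb qq_def by (simp_all add: nth_append del: replicate.simps)
    have pq: "pp \<noteq> qq" unfolding pp_def qq_def by simp
    have e1: "ka = pp \<or> kb = pp"
      using upd_nth_other[OF _ ka(5), of pp] upd_nth_other[OF _ kb(3), of pp] c1 by fastforce
    have e2: "ka = qq \<or> kb = qq"
      using upd_nth_other[OF _ ka(5), of qq] upd_nth_other[OF _ kb(3), of qq] c2 by fastforce
    show False
    proof (cases "ka = pp")
      case True
      then have "kb = qq" using e2 pq by auto
      then have "reading_word zz ! pp = P + 3" using upd_nth_other[OF _ kb(3), of pp] pq c1 by simp
      moreover have "reading_word zz ! pp = Suc i" using upd_nth_same[OF ka(3) ka(5)] True by simp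
      moreover have "i = P + 4" using ka(4) True c1 by simp
      ultimately show False by simp
    next
      case False
      then have "ka = qq" using e1 e2 pq by auto
      then have i3: "i = P + 3" using ka(4) c2 by simp
      have "unmatched i 0 (reading_word ta) 0 = map ((+) (length ?X)) [0..<z0]"
        unfolding rwa i3 unm_mid[of P "P+3" lam, simplified] unm_a ..
      then have "ka < length ?X + z0" using ka(1,2) by (cases z0) auto
      then show False using \<open>ka = qq\<close> unfolding qq_def by simp
    qed
  qed
qed

theorem lemma5p5:
  fixes lam :: "nat list" and n :: nat
  assumes "is_partition lam"
    and "length lam \<le> n"
    and "\<exists>p\<in>{1..length lam - 2}. lam ! p + 2 \<le> lam ! (p - 1) \<and> lam ! (p + 1) \<le> lam ! p"
  shows "\<not> is_lattice (tableaux n lam) (crystal_le n lam)"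
proof -
  obtain p where p: "1 \<le> p" "p \<le> length lam - 2" "lam ! p + 2 \<le> lam ! (p - 1)" using assms(3) by auto
  define P where "P = p - 1"
  have pP: "p = Suc P" using p(1) P_def by simp
  have lP: "Suc (Suc P) < length lam" using p(1,2) pP by linarith
  have yp: "0 < lam ! Suc P" "0 < lam ! Suc (Suc P)" using part_pos[OF assms(1)] lP by auto
  have yz: "lam ! Suc (Suc P) \<le> lam ! Suc P" using part_mono[OF assms(1)] lP by simp
  have xy: "lam ! Suc P + 2 \<le> lam ! P" using p(3) pP by simp
  show ?thesis
    by (rule main[OF assms(1,2) lP, of "lam ! P - 2" "lam ! Suc P - 1" "lam ! Suc (Suc P) - 1"])
      (use xy yz yp in auto)
qed

end
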